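(* Let $k\ge2$ be an even integer. For every constant $\epsilon>0$, no deterministic online algorithm is $(1-\frac{2}{k+2}+\epsilon)$-competitive for the maximum-cardinality online matching problem under edge arrivals with a hard budget of $k$ reassignments per arrival. That is, for every deterministic online algorithm for this problem and every constant $c\ge 0$, there is an instance on which the algorithm's final matching has cardinality strictly less than $(1-\frac{2}{k+2}+\epsilon)\cdot\mathsf{OPT}-c$, where $\mathsf{OPT}$ is the maximum cardinality of a matching in $G$.
   Context: Problem: $G=(V,E)$ is a graph, not necessarily bipartite. The algorithm initially knows $V$ and $k$. Over $|E|$ timesteps the edges of $G$ are revealed one at a time. At the end of each timestep the algorithm must output a matching in the graph revealed so far. The new matching $M_2$ must be obtainable from the previous matching $M_1$ (empty before the first timestep) by at most $k$ (re)assignments, the number of (re)assignments being the number of vertices of nonzero degree in $M_1\triangle M_2$; once a vertex is matched it must remain matched at all later timesteps. An algorithm is $\alpha$-competitive if there is a constant $c\ge0$ such that on every instance the cardinality of its final matching is at least $\alpha\cdot\mathsf{OPT}-c$. *)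

theory Defs
  imports Complex_Main
begin

definition is_edge :: "'v set \<Rightarrow> bool" where
  "is_edge e \<longleftrightarrow> card e = 2"

definition is_matching :: "'v set set \<Rightarrow> bool" where
  "is_matching M \<longleftrightarrow> (\<forall>e\<in>M. is_edge e) \<and>
     (\<forall>e1\<in>M. \<forall>e2\<in>M. e1 \<noteq> e2 \<longrightarrow> e1 \<inter> e2 = {})"

text \<open>An instance: a finite vertex set V and the list of edges of G in arrival
order (each edge of G revealed exactly once).\<close>

definition valid_instance :: "'v set \<Rightarrow> 'v set list \<Rightarrow> bool" where
  "valid_instance V es \<longleftrightarrow> finite V \<and> distinct es \<and>
     (\<forall>e\<in>set es. is_edge e \<and> e \<subseteq> V)"

definition reassignments :: "'v set set \<Rightarrow> 'v set set \<Rightarrow> nat" where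
  "reassignments M1 M2 = card (\<Union> ((M1 - M2) \<union> (M2 - M1)))"

text \<open>A deterministic online algorithm is a function mapping the known vertex
set V and the list of edges revealed so far to the matching output at the end
of the current timestep.\<close>

definition alg_output :: "('v set \<Rightarrow> 'v set list \<Rightarrow> 'v set set) \<Rightarrow> 'v set \<Rightarrow> 'v set list \<Rightarrow> 'v set set" where
  "alg_output alg V es = (if es = [] then {} else alg V es)"

definition feasible_algorithm :: "nat \<Rightarrow> ('v set \<Rightarrow> 'v set list \<Rightarrow> 'v set set) \<Rightarrow> bool" where
  "feasible_algorithm k alg \<longleftrightarrow>
     (\<forall>V es e. valid_instance V (es @ [e]) \<longrightarrow>
        (let M1 = alg_output alg V es; M2 = alg_output alg V (es @ [e]) in
          is_matching M2 \<and> M2 \<subseteq> set (es @ [e]) \<and>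
          reassignments M1 M2 \<le> k \<and> \<Union> M1 \<subseteq> \<Union> M2))"

definition OPT :: "'v set list \<Rightarrow> nat" where
  "OPT es = Max {card M | M. is_matching M \<and> M \<subseteq> set es}"

end

theory Submission imports Defs begin

locale gadget =
  fixes k :: nat
  assumes evk: "even k" and k2: "k \<ge> 2"
begin

definition gv :: "nat \<Rightarrow> nat \<Rightarrow> nat" where "gv i j = i*(k+2)+j"
definition pe :: "nat \<Rightarrow> nat \<Rightarrow> nat set" where "pe i j = {gv i j, Suc (gv i j)}"
definition EE :: "nat \<Rightarrow> nat set set" where "EE i = pe i ` {0..k}"
definition PP :: "nat \<Rightarrow> nat set set" where "PP i = pe i ` {j. odd j \<and> j < k}"
definition AA :: "nat \<Rightarrow> nat set set" where "AA i = pe i ` {j. even j \<and> j \<le> k}"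
definition PT :: "nat \<Rightarrow> nat set set" where "PT i = pe i ` {1..<k}"

lemma gv_div: assumes "j < k+2" shows "gv i j div (k+2) = i"
proof -
  have h: "k+2 \<noteq> 0" by simp
  have "(j + i*(k+2)) div (k+2) = i + j div (k+2)" by (rule div_mult_self1[OF h])
  moreover have "j div (k+2) = 0" using assms by (rule div_less)
  ultimately show ?thesis unfolding gv_def by (metis add.commute add.right_neutral)
qed
lemma gv_mod: assumes "j < k+2" shows "gv i j mod (k+2) = j"
proof -
  have h: "k+2 \<noteq> 0" by simp
  have "(j + i*(k+2)) mod (k+2) = j mod (k+2)" by (rule mod_mult_self1)
  moreover have "j mod (k+2) = j" using assms by (rule mod_less)
  ultimately show ?thesis unfolding gv_def by (metis add.commute)
qed

lemma pe_mem: assumes "v \<in> pe i j" "j \<le> k"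
  shows "v div (k+2) = i \<and> (v mod (k+2) = j \<or> v mod (k+2) = Suc j)"
proof -
  have "v = gv i j \<or> v = gv i (Suc j)" using assms(1) unfolding pe_def gv_def by auto
  moreover have "j < k+2" "Suc j < k+2" using assms(2) by auto
  ultimately show ?thesis using gv_div gv_mod by auto
qed

lemma pe_edge: "is_edge (pe i j)"
  unfolding is_edge_def pe_def by simp

lemma pe_meet: assumes "a \<le> k" "b \<le> k" "pe i a \<inter> pe i' b \<noteq> {}"
  shows "i = i' \<and> (a = b \<or> a = Suc b \<or> b = Suc a)"
proof -
  obtain v where v: "v \<in> pe i a" "v \<in> pe i' b" using assms(3) by blast
  from pe_mem[OF v(1) assms(1)] pe_mem[OF v(2) assms(2)] show ?thesis by auto
qed

lemma pe_inj: assumes "a \<le> k" "b \<le> k" "pe i a = pe i' b"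
  shows "i = i' \<and> a = b"
proof -
  have "gv i a \<in> pe i' b" "gv i' b \<in> pe i a" using assms(3) unfolding pe_def by auto
  then have "gv i a = gv i' b"
    unfolding pe_def by auto
  moreover have "a < k+2" "b < k+2" using assms(1,2) by auto
  ultimately show ?thesis using gv_div gv_mod by metis
qed

lemma adj_not_both: assumes "is_matching M" "Suc a \<le> k" "pe i a \<in> M"
  shows "pe i (Suc a) \<notin> M"
proof
  assume "pe i (Suc a) \<in> M"
  moreover have "pe i a \<noteq> pe i (Suc a)" using pe_inj[of a "Suc a" i i] assms(2) by auto
  moreover have "Suc (gv i a) \<in> pe i a \<inter> pe i (Suc a)" unfolding pe_def gv_def by auto
  ultimately show False using assms(1,3) unfolding is_matching_def by blast
qed

lemma EE_mem: assumes "f \<in> EE i'" "v \<in> f" shows "f \<in> EE (v div (k+2))"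
  using assms pe_mem unfolding EE_def by auto

lemma cover: assumes "gv i j \<in> \<Union>M" "M \<subseteq> (\<Union>i'. EE i')" "1 \<le> j" "j \<le> k"
  shows "pe i j \<in> M \<or> pe i (j - 1) \<in> M"
proof -
  obtain f where f: "f \<in> M" "gv i j \<in> f" using assms(1) by blast
  then obtain i' b where b: "f = pe i' b" "b \<le> k" using assms(2) unfolding EE_def by auto
  from pe_mem[OF f(2)[unfolded b(1)] b(2)] have "i' = i" "j = b \<or> j = Suc b"
    using gv_div gv_mod assms(4) by auto
  then show ?thesis using f b by auto
qed

lemma odd_chain:
  assumes "is_matching M" "M \<subseteq> (\<Union>i'. EE i')" "\<forall>j\<in>{1..k}. gv i j \<in> \<Union>M" "pe i 0 \<notin> M"
  shows "2*m+1 < k \<Longrightarrow> pe i (2*m+1) \<in> M"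
proof (induction m)
  case 0
  then show ?case using cover[of i 1 M] assms by auto
next
  case (Suc m)
  then have "pe i (2*m+1) \<in> M" by simp
  then have "pe i (2*m+2) \<notin> M" using adj_not_both[OF assms(1), of "2*m+1" i] Suc.prems by auto
  moreover have "pe i (2*m+3) \<in> M \<or> pe i (2*m+2) \<in> M"
    using cover[of i "2*m+3" M] assms Suc.prems by (auto simp: numeral_3_eq_3)
  moreover have "2 * Suc m + 1 = 2*m+3" by simp
  ultimately show ?case by metis
qed

lemma even_chain:
  assumes "is_matching M" "M \<subseteq> (\<Union>i'. EE i')" "\<forall>j\<in>{1..k}. gv i j \<in> \<Union>M" "pe i 0 \<in> M"
  shows "2*m \<le> k \<Longrightarrow> pe i (2*m) \<in> M"
proof (induction m)
  case 0
  then show ?case using assms by simp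
next
  case (Suc m)
  then have "pe i (2*m) \<in> M" by simp
  then have "pe i (2*m+1) \<notin> M" using adj_not_both[OF assms(1), of "2*m" i] Suc.prems by auto
  moreover have "pe i (2*m+2) \<in> M \<or> pe i (2*m+1) \<in> M"
    using cover[of i "2*m+2" M] assms Suc.prems by auto
  ultimately show ?case by simp
qed


lemma PP_cover: assumes "PP i \<subseteq> M" shows "\<forall>j\<in>{1..k}. gv i j \<in> \<Union>M"
proof
  fix j assume j: "j \<in> {1..k}"
  show "gv i j \<in> \<Union>M"
  proof (cases "odd j")
    case True
    then have "j < k" using j evk by (metis atLeastAtMost_iff le_neq_implies_less)
    then have "pe i j \<in> PP i" using True unfolding PP_def by auto
    then show ?thesis using assms unfolding pe_def by blast
  next
    case False
    then have "odd (j-1)" "j - 1 < k" using j by auto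
    then have "pe i (j-1) \<in> PP i" unfolding PP_def by auto
    moreover have "gv i j \<in> pe i (j-1)" using j unfolding pe_def gv_def by auto
    ultimately show ?thesis using assms by blast
  qed
qed

lemma UA: "\<Union>(AA i) = {gv i 0..<gv i 0 + (k+2)}"
proof
  show "\<Union>(AA i) \<subseteq> {gv i 0..<gv i 0 + (k+2)}"
    unfolding AA_def pe_def gv_def by auto
next
  show "{gv i 0..<gv i 0 + (k+2)} \<subseteq> \<Union>(AA i)"
  proof
    fix v assume v: "v \<in> {gv i 0..<gv i 0 + (k+2)}"
    define j where "j = v - gv i 0"
    have vj: "v = gv i j" "j \<le> k+1" using v unfolding j_def gv_def by auto
    show "v \<in> \<Union>(AA i)"
    proof (cases "even j")
      case True
      then have "j \<le> k" using vj evk by (metis Suc_eq_plus1 even_Suc le_SucE)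
      then have "pe i j \<in> AA i" using True unfolding AA_def by auto
      then show ?thesis using vj unfolding pe_def by blast
    next
      case False
      then have "even (j-1)" "j - 1 \<le> k" "j \<ge> 1" using vj by auto presburger
      then have "pe i (j-1) \<in> AA i" unfolding AA_def by auto
      moreover have "v \<in> pe i (j-1)" using vj \<open>j \<ge> 1\<close> unfolding pe_def gv_def by auto
      ultimately show ?thesis by blast
    qed
  qed
qed

lemma card_UA: "card (\<Union>(AA i)) = k+2"
  unfolding UA by simp

lemma edge_finite: "is_edge e \<Longrightarrow> finite e"
  unfolding is_edge_def by (metis card.infinite zero_neq_numeral)

lemma lock:
  assumes m1: "is_matching M1" and m2: "is_matching M2" and f1: "finite M1" and f2: "finite M2"
    and P1: "PP i \<subseteq> M1" and sub: "M2 \<subseteq> (\<Union>i'. EE i')" and mono: "\<Union>M1 \<subseteq> \<Union>M2"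
    and re: "reassignments M1 M2 \<le> k"
  shows "M2 \<inter> EE i = PP i"
proof -
  have cov: "\<forall>j\<in>{1..k}. gv i j \<in> \<Union>M2" using PP_cover[OF P1] mono by blast
  have n0: "pe i 0 \<notin> M2"
  proof
    assume h: "pe i 0 \<in> M2"
    have "AA i \<subseteq> M2"
    proof
      fix f assume "f \<in> AA i"
      then obtain j where j: "f = pe i j" "even j" "j \<le> k" unfolding AA_def by auto
      then have "j = 2*(j div 2)" by simp
      then show "f \<in> M2" using even_chain[OF m2 sub cov h, of "j div 2"] j by metis
    qed
    moreover have "AA i \<inter> M1 = {}"
    proof (rule ccontr)
      assume "AA i \<inter> M1 \<noteq> {}"
      then obtain j where j: "pe i j \<in> M1" "even j" "j \<le> k" unfolding AA_def by auto
      show False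
      proof (cases "j = 0")
        case True
        have "pe i 1 \<in> PP i" using k2 unfolding PP_def by auto
        then show False using adj_not_both[OF m1, of 0 i] j True P1 k2 by auto
      next
        case False
        then have "odd (j-1)" "j - 1 < k" using j by auto
        then have "pe i (j-1) \<in> M1" using P1 unfolding PP_def by auto
        then show False using adj_not_both[OF m1, of "j-1" i] j False by auto
      qed
    qed
    ultimately have "\<Union>(AA i) \<subseteq> \<Union>((M1 - M2) \<union> (M2 - M1))" by blast
    moreover have "finite (\<Union>((M1 - M2) \<union> (M2 - M1)))"
    proof (rule finite_Union)
      show "finite ((M1 - M2) \<union> (M2 - M1))" using f1 f2 by simp
      show "\<And>e. e \<in> (M1 - M2) \<union> (M2 - M1) \<Longrightarrow> finite e"
        using m1 m2 edge_finite unfolding is_matching_def by auto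
    qed
    ultimately have "k + 2 \<le> reassignments M1 M2"
      unfolding reassignments_def using card_mono card_UA by metis
    then show False using re by simp
  qed
  have P2: "PP i \<subseteq> M2"
  proof
    fix f assume "f \<in> PP i"
    then obtain j where j: "f = pe i j" "odd j" "j < k" unfolding PP_def by auto
    then have "j = 2*(j div 2) + 1" by simp
    then show "f \<in> M2" using odd_chain[OF m2 sub cov n0, of "j div 2"] j by metis
  qed
  show ?thesis
  proof
    show "M2 \<inter> EE i \<subseteq> PP i"
    proof
      fix f assume f: "f \<in> M2 \<inter> EE i"
      then obtain j where j: "f = pe i j" "j \<le> k" unfolding EE_def by auto
      show "f \<in> PP i"
      proof (cases "odd j")
        case True
        then have "j < k" using j evk by (metis le_neq_implies_less)
        then show ?thesis using True j unfolding PP_def by auto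
      next
        case False
        have "j \<noteq> 0"
        proof
          assume "j = 0" with n0 f j show False by auto
        qed
        then have "odd (j-1)" "j - 1 < k" using False j by auto
        then have "pe i (j-1) \<in> M2" using P2 unfolding PP_def by auto
        then show ?thesis using adj_not_both[OF m2, of "j-1" i] j f \<open>j \<noteq> 0\<close> by auto
      qed
    qed
  next
    show "PP i \<subseteq> M2 \<inter> EE i" using P2 unfolding PP_def EE_def by auto
  qed
qed

lemma match_card: assumes "is_matching Q" "finite Q" shows "card (\<Union>Q) = 2 * card Q"
proof -
  have pw: "pairwise disjnt Q" using assms(1) unfolding is_matching_def pairwise_def disjnt_def by blast
  have fin: "\<And>A. A \<in> Q \<Longrightarrow> finite A" using assms(1) edge_finite unfolding is_matching_def by blast
  have "card (\<Union>Q) = sum card Q" by (rule card_Union_disjoint[OF pw fin])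
  also have "\<dots> = sum (\<lambda>_. 2) Q" using assms(1) unfolding is_matching_def is_edge_def by simp
  finally show ?thesis by simp
qed

lemma card_PP: "card (PP i) = k div 2"
proof -
  have "PP i = (\<lambda>m. pe i (2*m+1)) ` {..<k div 2}"
    unfolding PP_def
  proof (rule set_eqI, rule iffI)
    fix f assume "f \<in> pe i ` {j. odd j \<and> j < k}"
    then obtain j where "f = pe i j" "odd j" "j < k" by auto
    then show "f \<in> (\<lambda>m. pe i (2*m+1)) ` {..<k div 2}" using evk
      by (auto intro!: image_eqI[of _ _ "j div 2"]; presburger)
  next
    fix f assume "f \<in> (\<lambda>m. pe i (2*m+1)) ` {..<k div 2}"
    then show "f \<in> pe i ` {j. odd j \<and> j < k}" using evk by (auto; presburger)
  qed
  moreover have "inj_on (\<lambda>m. pe i (2*m+1)) {..<k div 2}"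
  proof (rule inj_onI)
    fix x y assume "x \<in> {..<k div 2}" "y \<in> {..<k div 2}" "pe i (2*x+1) = pe i (2*y+1)"
    then show "x = y" using pe_inj[of "2*x+1" "2*y+1" i i] evk by auto
  qed
  ultimately show ?thesis by (simp add: card_image)
qed

lemma card_AA: "card (AA i) = k div 2 + 1"
proof -
  have "AA i = (\<lambda>m. pe i (2*m)) ` {..k div 2}"
    unfolding AA_def
  proof (rule set_eqI, rule iffI)
    fix f assume "f \<in> pe i ` {j. even j \<and> j \<le> k}"
    then obtain j where "f = pe i j" "even j" "j \<le> k" by auto
    then show "f \<in> (\<lambda>m. pe i (2*m)) ` {..k div 2}" using evk
      by (auto intro!: image_eqI[of _ _ "j div 2"])
  next
    fix f assume "f \<in> (\<lambda>m. pe i (2*m)) ` {..k div 2}"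
    then show "f \<in> pe i ` {j. even j \<and> j \<le> k}" using evk by auto
  qed
  moreover have "inj_on (\<lambda>m. pe i (2*m)) {..k div 2}"
  proof (rule inj_onI)
    fix x y assume "x \<in> {..k div 2}" "y \<in> {..k div 2}" "pe i (2*x) = pe i (2*y)"
    then show "x = y" using pe_inj[of "2*x" "2*y" i i] evk by auto
  qed
  ultimately show ?thesis by (simp add: card_image)
qed


lemma odd_all:
  assumes "is_matching M" "M \<subseteq> (\<Union>i'. EE i')" "\<forall>j\<in>{1..k}. gv i j \<in> \<Union>M" "pe i 0 \<notin> M"
  shows "PP i \<subseteq> M"
proof
  fix f assume "f \<in> PP i"
  then obtain j where j: "f = pe i j" "odd j" "j < k" unfolding PP_def by auto
  then have "j = 2*(j div 2) + 1" by simp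
  then show "f \<in> M" using odd_chain[OF assms, of "j div 2"] j by metis
qed

lemma unlocked:
  assumes m: "is_matching M" and fM: "finite M" and sub: "M \<subseteq> (\<Union>i'. EE i')"
    and n0: "pe i 0 \<notin> M" and nk: "pe i k \<notin> M" and nP: "\<not> PP i \<subseteq> M"
  shows "card (M \<inter> EE i) \<le> k div 2 - 1"
proof (rule ccontr)
  assume "\<not> card (M \<inter> EE i) \<le> k div 2 - 1"
  then have c: "card (M \<inter> EE i) \<ge> k div 2" by simp
  define Q where "Q = M \<inter> EE i"
  have mQ: "is_matching Q" using m unfolding Q_def is_matching_def by blast
  have fQ: "finite Q" using fM unfolding Q_def by simp
  define R where "R = {gv i 1..<gv i 1 + k}"
  have QR: "\<Union>Q \<subseteq> R"
  proof
    fix v assume "v \<in> \<Union>Q"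
    then obtain f where f: "f \<in> Q" "v \<in> f" by blast
    then obtain j where j: "f = pe i j" "j \<le> k" unfolding Q_def EE_def by auto
    have "j \<noteq> 0"
    proof
      assume "j = 0" with f j n0 show False unfolding Q_def by auto
    qed
    moreover have "j \<noteq> k" using f j nk unfolding Q_def by auto
    ultimately show "v \<in> R" using f j unfolding R_def pe_def gv_def by auto
  qed
  have "card R = k" unfolding R_def by simp
  moreover have "card (\<Union>Q) \<ge> k"
  proof -
    have "k = 2 * (k div 2)" using evk by simp
    then show ?thesis using match_card[OF mQ fQ] c unfolding Q_def by linarith
  qed
  ultimately have "\<Union>Q = R" using QR by (metis card_seteq finite_atLeastLessThan R_def)
  then have "\<forall>j\<in>{1..k}. gv i j \<in> \<Union>M" unfolding R_def Q_def gv_def by auto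
  then have "PP i \<subseteq> M" using odd_all[OF m sub _ n0] by blast
  then show False using nP by simp
qed

lemma EE_disj: assumes "i \<noteq> i'" shows "EE i \<inter> EE i' = {}"
proof (rule ccontr)
  assume "EE i \<inter> EE i' \<noteq> {}"
  then obtain a b where "a \<le> k" "b \<le> k" "pe i a = pe i' b" unfolding EE_def by auto
  then show False using pe_inj assms by blast
qed

lemma PP_EE: "PP i \<subseteq> EE i" unfolding PP_def EE_def by auto
lemma AA_EE: "AA i \<subseteq> EE i" unfolding AA_def EE_def by auto

end

locale adv = gadget k for k +
  fixes alg :: "nat set \<Rightarrow> nat set list \<Rightarrow> nat set set" and N :: nat
  assumes feas: "feasible_algorithm k alg"
begin

definition VV :: "nat set" where "VV = {..<N*(k+2)}"
definition Mo :: "nat set list \<Rightarrow> nat set set" where "Mo es = alg_output alg VV es"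
definition revealed :: "nat set \<Rightarrow> nat set set" where
  "revealed S = (\<Union>i<N. PT i) \<union> (\<Union>i\<in>S. {pe i 0, pe i k})"
definition Inv :: "nat set list \<Rightarrow> nat set \<Rightarrow> bool" where
  "Inv es S \<longleftrightarrow> S \<subseteq> {..<N} \<and> valid_instance VV es \<and> set es = revealed S \<and>
     (\<forall>i\<in>S. Mo es \<inter> EE i = PP i)"

lemma step_props:
  assumes "valid_instance VV (es @ [e])"
  shows "is_matching (Mo (es@[e])) \<and> Mo (es@[e]) \<subseteq> set (es@[e]) \<and>
    reassignments (Mo es) (Mo (es@[e])) \<le> k \<and> \<Union>(Mo es) \<subseteq> \<Union>(Mo (es@[e]))"
proof -
  have "let M1 = alg_output alg VV es; M2 = alg_output alg VV (es @ [e]) in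
          is_matching M2 \<and> M2 \<subseteq> set (es @ [e]) \<and>
          reassignments M1 M2 \<le> k \<and> \<Union> M1 \<subseteq> \<Union> M2"
    using feas[unfolded feasible_algorithm_def, THEN spec, THEN spec, THEN spec, THEN mp, OF assms] .
  then show ?thesis unfolding Let_def Mo_def .
qed

lemma valid_prefix: "valid_instance V (es @ [e]) \<Longrightarrow> valid_instance V es"
  unfolding valid_instance_def by auto

lemma basic:
  assumes "valid_instance VV es"
  shows "is_matching (Mo es) \<and> Mo es \<subseteq> set es"
proof (cases es rule: rev_cases)
  case Nil
  then show ?thesis unfolding Mo_def alg_output_def is_matching_def by simp
next
  case (snoc ys y)
  then show ?thesis using step_props[of ys y] assms by simp
qed

lemma PT_EE: "PT i \<subseteq> EE i" unfolding PT_def EE_def by (rule image_mono) auto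

lemma revealed_sub: "revealed S \<subseteq> (\<Union>i<N. PT i) \<union> (\<Union>i\<in>S. EE i)"
proof -
  have "\<And>i. {pe i 0, pe i k} \<subseteq> EE i" unfolding EE_def by auto
  then show ?thesis unfolding revealed_def by blast
qed

lemma revealed_EE: assumes "S \<subseteq> {..<N}" shows "revealed S \<subseteq> (\<Union>i<N. EE i)"
proof -
  have a: "(\<Union>i<N. PT i) \<subseteq> (\<Union>i<N. EE i)" by (rule UN_mono) (auto simp: PT_EE)
  have b: "(\<Union>i\<in>S. EE i) \<subseteq> (\<Union>i<N. EE i)" by (rule UN_mono) (use assms in auto)
  show ?thesis using revealed_sub a b by (meson Un_least subset_trans)
qed

lemma lock_step:
  assumes v: "valid_instance VV (es@[e])" and s: "set (es@[e]) \<subseteq> (\<Union>i'. EE i')"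
    and P: "PP i \<subseteq> Mo es"
  shows "Mo (es@[e]) \<inter> EE i = PP i"
proof -
  have v0: "valid_instance VV es" using valid_prefix v by blast
  from basic[OF v0] have m1: "is_matching (Mo es)" "Mo es \<subseteq> set es" by auto
  from step_props[OF v] have m2: "is_matching (Mo (es@[e]))" "Mo (es@[e]) \<subseteq> set (es@[e])"
    "reassignments (Mo es) (Mo (es@[e])) \<le> k" "\<Union>(Mo es) \<subseteq> \<Union>(Mo (es@[e]))" by auto
  show ?thesis
  proof (rule lock[OF m1(1) m2(1) _ _ P _ m2(4) m2(3)])
    show "finite (Mo es)" using m1(2) finite_subset by blast
    show "finite (Mo (es@[e]))" using m2(2) finite_subset by blast
    show "Mo (es @ [e]) \<subseteq> (\<Union>i'. EE i')" using m2(2) s by blast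
  qed
qed

lemma pe_V: assumes "i < N" "j \<le> k" shows "pe i j \<subseteq> VV"
proof -
  have "Suc (gv i j) < N*(k+2)"
  proof -
    have "Suc (gv i j) \<le> i*(k+2) + (k+1)" unfolding gv_def using assms(2) by simp
    also have "\<dots> < (i+1)*(k+2)" by simp
    also have "\<dots> \<le> N*(k+2)" using assms(1) by (intro mult_right_mono) auto
    finally show ?thesis .
  qed
  then show ?thesis unfolding pe_def VV_def by auto
qed

definition es1 :: "nat set list" where
  "es1 = map (\<lambda>(i,j). pe i j) (List.product [0..<N] [1..<k])"

lemma Inv_es1: "Inv es1 {}"
proof -
  have "inj_on (\<lambda>(i,j). pe i j) (set (List.product [0..<N] [1..<k]))"
  proof (rule inj_onI)
    fix x y assume "x \<in> set (List.product [0..<N] [1..<k])" "y \<in> set (List.product [0..<N] [1..<k])"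
      "(\<lambda>(i,j). pe i j) x = (\<lambda>(i,j). pe i j) y"
    then show "x = y" using pe_inj[of "snd x" "snd y" "fst x" "fst y"] by (auto simp: case_prod_beta prod_eq_iff)
  qed
  then have d: "distinct es1" unfolding es1_def by (simp add: distinct_map distinct_product)
  have "set es1 = (\<lambda>(i,j). pe i j) ` ({0..<N} \<times> {1..<k})" unfolding es1_def by simp
  also have "\<dots> = (\<Union>i<N. PT i)" unfolding PT_def by (auto simp: image_iff)
  finally have s: "set es1 = revealed {}" unfolding revealed_def by simp
  have e: "\<forall>e\<in>set es1. is_edge e \<and> e \<subseteq> VV" unfolding es1_def using pe_edge pe_V by auto
  show ?thesis unfolding Inv_def valid_instance_def VV_def using d s e[unfolded VV_def] by simp
qed

lemma Inv_step:
  assumes I: "Inv es S" and i: "i < N" "i \<notin> S" and P: "PP i \<subseteq> Mo es"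
  shows "Inv (es @ [pe i 0, pe i k]) (insert i S)"
proof -
  from I have S: "S \<subseteq> {..<N}" and v: "valid_instance VV es" and se: "set es = revealed S"
    and L: "\<forall>j\<in>S. Mo es \<inter> EE j = PP j" unfolding Inv_def by auto
  have nr: "pe i j \<notin> revealed S" if j: "j = 0 \<or> j = k" for j
  proof
    assume "pe i j \<in> revealed S"
    then consider (a) i' j' where "pe i j = pe i' j'" "j' \<in> {1..<k}"
      | (b) i' where "i' \<in> S" "pe i j = pe i' 0 \<or> pe i j = pe i' k"
      unfolding revealed_def PT_def by blast
    then show False
    proof cases
      case a
      then show False using pe_inj[of j j' i i'] j k2 by auto
    next
      case b
      have "j \<le> k" using j by auto
      then have "i = i'" using b pe_inj[of j 0 i i'] pe_inj[of j k i i'] by auto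
      then show False using b i by simp
    qed
  qed
  have n0: "pe i 0 \<notin> revealed S" using nr by simp
  have nk: "pe i k \<notin> revealed S" using nr by simp
  have ne: "pe i 0 \<noteq> pe i k" using pe_inj[of 0 k i i] k2 by auto
  have v2: "valid_instance VV (es @ [pe i 0, pe i k])"
    unfolding valid_instance_def
  proof (intro conjI)
    show "finite VV" unfolding VV_def by simp
    show "distinct (es @ [pe i 0, pe i k])" using v n0 nk ne se unfolding valid_instance_def by simp
    show "\<forall>e\<in>set (es @ [pe i 0, pe i k]). is_edge e \<and> e \<subseteq> VV"
      using v pe_edge pe_V[OF i(1)] unfolding valid_instance_def by simp
  qed
  have v1: "valid_instance VV (es @ [pe i 0])"
    using v2 valid_prefix[of VV "es @ [pe i 0]" "pe i k"] by simp
  have s2: "set (es @ [pe i 0, pe i k]) = revealed (insert i S)"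
    using se unfolding revealed_def by auto
  have S2: "insert i S \<subseteq> {..<N}" using S i by auto
  have "set ((es @ [pe i 0]) @ [pe i k]) \<subseteq> (\<Union>i<N. EE i)"
    using s2 revealed_EE[OF S2] by simp
  also have "\<dots> \<subseteq> (\<Union>i'. EE i')" by blast
  finally have sE2: "set ((es @ [pe i 0]) @ [pe i k]) \<subseteq> (\<Union>i'. EE i')" .
  have sE1: "set (es @ [pe i 0]) \<subseteq> (\<Union>i'. EE i')" using sE2 by auto
  have "\<forall>j\<in>insert i S. Mo (es @ [pe i 0, pe i k]) \<inter> EE j = PP j"
  proof
    fix j assume j: "j \<in> insert i S"
    have "PP j \<subseteq> Mo es" using j P L by auto
    then have "Mo (es @ [pe i 0]) \<inter> EE j = PP j" using lock_step[OF v1 sE1] by blast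
    then have "PP j \<subseteq> Mo (es @ [pe i 0])" by auto
    then have "Mo ((es @ [pe i 0]) @ [pe i k]) \<inter> EE j = PP j" using lock_step[OF _ sE2] v2 by simp
    then show "Mo (es @ [pe i 0, pe i k]) \<inter> EE j = PP j" by simp
  qed
  then show ?thesis unfolding Inv_def using S2 v2 s2 by blast
qed

lemma loop:
  assumes "Inv es S"
  shows "\<exists>es' S'. Inv es' S' \<and> (\<forall>i<N. i \<notin> S' \<longrightarrow> \<not> PP i \<subseteq> Mo es')"
  using assms
proof (induction "N - card S" arbitrary: es S rule: less_induct)
  case less
  show ?case
  proof (cases "\<exists>i<N. i \<notin> S \<and> PP i \<subseteq> Mo es")
    case False
    then show ?thesis using less.prems by blast
  next
    case True
    then obtain i where i: "i < N" "i \<notin> S" "PP i \<subseteq> Mo es" by blast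
    have S: "S \<subseteq> {..<N}" using less.prems unfolding Inv_def by auto
    then have fS: "finite S" using finite_subset by blast
    have "insert i S \<subseteq> {..<N}" using S i by auto
    then have "card (insert i S) \<le> N" using card_mono[of "{..<N}" "insert i S"] by simp
    then have "N - card (insert i S) < N - card S" using fS i(2) by simp
    then show ?thesis using less.hyps Inv_step[OF less.prems i] by blast
  qed
qed


lemma nr_lemma:
  assumes "i \<notin> S" "j = 0 \<or> j = k"
  shows "pe i j \<notin> revealed S"
proof
  assume "pe i j \<in> revealed S"
  then consider (a) i' j' where "pe i j = pe i' j'" "j' \<in> {1..<k}"
    | (b) i' where "i' \<in> S" "pe i j = pe i' 0 \<or> pe i j = pe i' k"
    unfolding revealed_def PT_def by blast
  then show False
  proof cases
    case a
    then show False using pe_inj[of j j' i i'] assms(2) k2 by auto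
  next
    case b
    have "j \<le> k" using assms(2) by auto
    then have "i = i'" using b pe_inj[of j 0 i i'] pe_inj[of j k i i'] by auto
    then show False using b assms(1) by simp
  qed
qed

definition WW :: "nat set \<Rightarrow> nat set set" where
  "WW S = (\<Union>i<N. (if i \<in> S then AA i else PP i))"

lemma WW_mem: assumes "f \<in> WW S"
  shows "\<exists>i a. i < N \<and> a \<le> k \<and> f = pe i a \<and> (even a \<longleftrightarrow> i \<in> S)"
proof -
  obtain i where i: "i < N" "f \<in> (if i \<in> S then AA i else PP i)" using assms unfolding WW_def by blast
  show ?thesis
  proof (cases "i \<in> S")
    case True
    then show ?thesis using i unfolding AA_def by auto
  next
    case False
    then obtain x where x: "f = pe i x" "odd x" "x < k" using i unfolding PP_def by auto
    show ?thesis by (intro exI[of _ i] exI[of _ x]) (use False i x in auto)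
  qed
qed

lemma WW_matching: "is_matching (WW S)"
  unfolding is_matching_def
proof (intro conjI ballI impI)
  fix f assume "f \<in> WW S"
  then show "is_edge f" using WW_mem pe_edge by blast
next
  fix f1 f2 assume f: "f1 \<in> WW S" "f2 \<in> WW S" "f1 \<noteq> f2"
  obtain i a where A: "i < N" "a \<le> k" "f1 = pe i a" "even a \<longleftrightarrow> i \<in> S" using WW_mem[OF f(1)] by blast
  obtain i' b where B: "i' < N" "b \<le> k" "f2 = pe i' b" "even b \<longleftrightarrow> i' \<in> S" using WW_mem[OF f(2)] by blast
  show "f1 \<inter> f2 = {}"
  proof (rule ccontr)
    assume "f1 \<inter> f2 \<noteq> {}"
    then have "i = i' \<and> (a = b \<or> a = Suc b \<or> b = Suc a)" using pe_meet A B by blast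
    then show False using A B f(3) by auto
  qed
qed

lemma OPT_ge: assumes "is_matching W" "W \<subseteq> set es" shows "card W \<le> OPT es"
proof -
  have fin: "finite {card M | M. is_matching M \<and> M \<subseteq> set es}"
    by (rule finite_subset[of _ "card ` Pow (set es)"]) auto
  show ?thesis unfolding OPT_def by (rule Max_ge[OF fin]) (use assms in blast)
qed

lemma EE_revealed: assumes "i \<in> S" "i < N" shows "EE i \<subseteq> revealed S"
proof
  fix f assume "f \<in> EE i"
  then obtain j where j: "f = pe i j" "j \<le> k" unfolding EE_def by auto
  show "f \<in> revealed S"
  proof (cases "j = 0 \<or> j = k")
    case True
    then show ?thesis using j assms unfolding revealed_def by auto
  next
    case False
    then have "f \<in> PT i" using j unfolding PT_def by auto
    then show ?thesis using assms unfolding revealed_def by auto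
  qed
qed

lemma PP_PT: "PP i \<subseteq> PT i" unfolding PP_def PT_def by (rule image_mono) (auto dest: odd_pos)

lemma final:
  assumes I: "Inv es S" and U: "\<forall>i<N. i \<notin> S \<longrightarrow> \<not> PP i \<subseteq> Mo es"
  shows "real (card (Mo es)) \<le> (1 - 2 / (real k + 2)) * real (OPT es) \<and> real N \<le> real (OPT es)"
proof -
  define h where "h = k div 2"
  have kh: "k = 2*h" using evk unfolding h_def by simp
  have h1: "h \<ge> 1" using k2 kh by simp
  from I have S: "S \<subseteq> {..<N}" and v: "valid_instance VV es" and se: "set es = revealed S"
    and L: "\<forall>j\<in>S. Mo es \<inter> EE j = PP j" unfolding Inv_def by auto
  define M where "M = Mo es"
  have mM: "is_matching M" "M \<subseteq> set es" using basic[OF v] unfolding M_def by auto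
  have fM: "finite M" using mM(2) finite_subset by blast
  have MN: "M \<subseteq> (\<Union>i<N. EE i)" using mM(2) se revealed_EE[OF S] by blast
  have MU: "M \<subseteq> (\<Union>i'. EE i')" using MN by blast
  have "M = (\<Union>i<N. M \<inter> EE i)" using MN by blast
  then have cM: "card M = (\<Sum>i<N. card (M \<inter> EE i))"
    using card_UN_disjoint[of "{..<N}" "\<lambda>i. M \<inter> EE i"] fM EE_disj by auto
  have mi: "card (M \<inter> EE i) \<le> (if i \<in> S then h else h - 1)" if i: "i < N" for i
  proof (cases "i \<in> S")
    case True
    then show ?thesis using L card_PP unfolding M_def h_def by simp
  next
    case False
    have "pe i 0 \<notin> M" "pe i k \<notin> M" using nr_lemma[OF False] mM(2) se by auto
    then show ?thesis using unlocked[OF mM(1) fM MU] U i False unfolding M_def h_def by auto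
  qed
  define W where "W = WW S"
  have Wsub: "W \<subseteq> set es"
  proof
    fix f assume "f \<in> W"
    then obtain i where i: "i < N" "f \<in> (if i \<in> S then AA i else PP i)" unfolding W_def WW_def by blast
    show "f \<in> set es"
    proof (cases "i \<in> S")
      case True
      then show ?thesis using i AA_EE EE_revealed[OF True i(1)] se by auto
    next
      case False
      then have "f \<in> PT i" using i PP_PT by auto
      then show ?thesis using i se unfolding revealed_def by auto
    qed
  qed
  have fW: "\<forall>i\<in>{..<N}. finite (if i \<in> S then AA i else PP i)" unfolding AA_def PP_def by auto
  have dW: "\<forall>i\<in>{..<N}. \<forall>j\<in>{..<N}. i \<noteq> j \<longrightarrow> (if i \<in> S then AA i else PP i) \<inter> (if j \<in> S then AA j else PP j) = {}"
  proof (intro ballI impI)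
    fix i j assume "i \<in> {..<N}" "j \<in> {..<N}" "i \<noteq> j"
    moreover have "(if i \<in> S then AA i else PP i) \<subseteq> EE i" "(if j \<in> S then AA j else PP j) \<subseteq> EE j"
      using AA_EE PP_EE by auto
    ultimately show "(if i \<in> S then AA i else PP i) \<inter> (if j \<in> S then AA j else PP j) = {}"
      using EE_disj by blast
  qed
  have cW: "card W = (\<Sum>i<N. (if i \<in> S then h + 1 else h))"
  proof -
    have "card W = (\<Sum>i<N. card (if i \<in> S then AA i else PP i))"
      unfolding W_def WW_def by (rule card_UN_disjoint[OF _ fW dW]) simp
    also have "\<dots> = (\<Sum>i<N. (if i \<in> S then h + 1 else h))"
      by (rule sum.cong) (auto simp: card_AA card_PP h_def)
    finally show ?thesis .
  qed
  have OW: "card W \<le> OPT es" using OPT_ge[OF _ Wsub] WW_matching unfolding W_def by blast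
  have r: "1 - 2 / (real k + 2) = real h / (real h + 1)"
    using kh by (simp add: field_simps)
  have "real (card M) \<le> (\<Sum>i<N. real (if i \<in> S then h else h - 1))"
    unfolding cM of_nat_sum by (rule sum_mono) (use mi in auto)
  also have "\<dots> \<le> (\<Sum>i<N. real h / (real h + 1) * real (if i \<in> S then h + 1 else h))"
  proof (rule sum_mono)
    fix i assume "i \<in> {..<N}"
    have p: "real h + 1 > 0" by simp
    have q: "real (h - 1) * (real h + 1) \<le> real h * real h"
      using h1 by (simp add: of_nat_diff algebra_simps)
    show "real (if i \<in> S then h else h - 1) \<le> real h / (real h + 1) * real (if i \<in> S then h + 1 else h)"
    proof (cases "i \<in> S")
      case True
      then show ?thesis using p by (simp add: field_simps)
    next
      case False
      then show ?thesis using p q by (simp add: field_simps)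
    qed
  qed
  also have "\<dots> = real h / (real h + 1) * real (card W)"
    unfolding cW of_nat_sum sum_distrib_left by simp
  also have "\<dots> \<le> real h / (real h + 1) * real (OPT es)"
    using OW by (intro mult_left_mono) auto
  finally have A: "real (card (Mo es)) \<le> (1 - 2 / (real k + 2)) * real (OPT es)"
    unfolding r M_def .
  have "N \<le> (\<Sum>i<N. (if i \<in> S then h + 1 else h))"
  proof -
    have "(\<Sum>i<N. (1::nat)) \<le> (\<Sum>i<N. (if i \<in> S then h + 1 else h))"
      by (rule sum_mono) (use h1 in auto)
    then show ?thesis by simp
  qed
  then have "N \<le> OPT es" using OW cW by simp
  then show ?thesis using A by simp
qed

end

theorem theorem6:
  fixes k :: nat and \<epsilon> :: real
  assumes "even k" and "k \<ge> 2" and "\<epsilon> > 0"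
  shows "\<forall>alg :: nat set \<Rightarrow> nat set list \<Rightarrow> nat set set.
           feasible_algorithm k alg \<longrightarrow>
           (\<forall>c::real. c \<ge> 0 \<longrightarrow>
              (\<exists>V es. valid_instance V es \<and>
                 real (card (alg_output alg V es))
                   < (1 - 2 / (real k + 2) + \<epsilon>) * real (OPT es) - c))"
proof (intro allI impI)
  fix alg :: "nat set \<Rightarrow> nat set list \<Rightarrow> nat set set" and c :: real
  assume feas: "feasible_algorithm k alg" and c: "c \<ge> 0"
  define N where "N = nat \<lceil>c / \<epsilon>\<rceil> + 1"
  interpret A: adv k alg N
    by unfold_locales (use assms feas in auto)
  obtain es S where I: "A.Inv es S" and U: "\<forall>i<N. i \<notin> S \<longrightarrow> \<not> A.PP i \<subseteq> A.Mo es"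
    using A.loop[OF A.Inv_es1] by blast
  from A.final[OF I U] have B: "real (card (A.Mo es)) \<le> (1 - 2 / (real k + 2)) * real (OPT es)"
    and NO: "real N \<le> real (OPT es)" by auto
  have v: "valid_instance A.VV es" using I unfolding A.Inv_def by auto
  have "c / \<epsilon> < real N" unfolding N_def by linarith
  then have "c < \<epsilon> * real N" using assms(3) by (simp add: field_simps)
  also have "\<dots> \<le> \<epsilon> * real (OPT es)" using NO assms(3) by simp
  finally have "real (card (A.Mo es)) < (1 - 2 / (real k + 2) + \<epsilon>) * real (OPT es) - c"
    using B by (simp add: algebra_simps)
  then show "\<exists>V es. valid_instance V es \<and>
                 real (card (alg_output alg V es))
                   < (1 - 2 / (real k + 2) + \<epsilon>) * real (OPT es) - c"
    using v unfolding A.Mo_def by blast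
qed

end
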